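(* Let $(P,Q)$ be a global solution of the Cucker–Smale model with velocity control described in the context. Suppose there exists a constant $0<M<\infty$ such that \[ \frac{M_{G'}\|P^0\|}{\kappa\mathcal M}<\min\Big\{\int_{\|Q^0\|}^M\psi(r)\,dr,\ \psi(M)\min_{\substack{i,j\in[N]\\ i\ne j}}|q_i^0-q_j^0|\Big\}. \] Then $\inf_{t\ge0}\min_{i,j\in[N],\,i\ne j}|q_i(t)-q_j(t)|>0$.
   Context: Let $N\ge1$, $d\ge1$, $\kappa>0$, $[N]=\{1,\dots,N\}$. The velocity control function $G:\mathbb R^d\to\mathbb R^d$ is $G(p)=g(|p|)\,p/|p|$ for $p\ne0$, $G(0)=0$, with $g\in C^1([0,\infty))$, $g(0)=0$, $0<m\le g'\le M'$ on every compact interval (constants depending on the interval), and $g$ convex or concave on $(0,\infty)$. The kernel $\psi:(0,\infty)\to(0,\infty)$ is bounded, Lipschitz continuous and nonincreasing. The model is, for $i\in[N]$, $t>0$: \[ \dot q_i=G(p_i),\qquad \dot p_i=\frac{\kappa}{N}\sum_{k=1}^N\psi(|q_k-q_i|)\big(G(p_k)-G(p_i)\big),\qquad (q_i,p_i)(0)=(q_i^0,p_i^0)\in\mathbb R^d\times\mathbb R^d. \] Notation: $\|Q^0\|^2=\sum_{i,j}|q_i^0-q_j^0|^2$, $\|P^0\|^2=\sum_{i,j}|p_i^0-p_j^0|^2$; $P^0_M=\max_i|p_i^0|$, $M_{G'}=\max\{g'(r):0\le r\le P^0_M\}$, $m_{G'}=\min\{g'(r):0\le r\le P^0_M\}$,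 $\mathcal M=\min\{m_{G'},\,m_{G'}^2/M_{G'}\}$. *)

theory Defs
  imports "HOL-Analysis.Analysis"
begin

definition velG :: "(real \<Rightarrow> real) \<Rightarrow> 'a::real_normed_vector \<Rightarrow> 'a" where
  "velG g p = (if p = 0 then 0 else (g (norm p) / norm p) *\<^sub>R p)"

definition oint :: "(real \<Rightarrow> real) \<Rightarrow> real \<Rightarrow> real \<Rightarrow> real" where
  "oint f a b = (if a \<le> b then integral {a..b} f else - integral {b..a} f)"

definition cfg_norm :: "nat \<Rightarrow> (nat \<Rightarrow> 'a::real_normed_vector) \<Rightarrow> real" where
  "cfg_norm N x = sqrt (\<Sum>i\<in>{1..N}. \<Sum>j\<in>{1..N}. (norm (x i - x j))\<^sup>2)"

end

theory Submission
  imports Defs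
begin

lemma velG_eq: "velG g u = (g (norm u) / norm u) *\<^sub>R u"
  by (simp add: velG_def)

lemma deriv_norm_sq:
  fixes f :: "real \<Rightarrow> 'a::real_inner"
  assumes "(f has_vector_derivative f') (at t)"
  shows "((\<lambda>t. (norm (f t))\<^sup>2) has_real_derivative 2 * inner (f t) f') (at t)"
proof -
  have "((\<lambda>t. inner (f t) (f t)) has_derivative (\<lambda>h. inner (f t) (h *\<^sub>R f') + inner (h *\<^sub>R f') (f t))) (at t)"
    using assms unfolding has_vector_derivative_def
    by (intro derivative_eq_intros) auto
  moreover have "(\<lambda>h. inner (f t) (h *\<^sub>R f') + inner (h *\<^sub>R f') (f t)) = (*) (2 * inner (f t) f')"
    by (rule ext) (simp add: inner_commute algebra_simps)
  ultimately show ?thesis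
    unfolding power2_norm_eq_inner has_field_derivative_def
    by simp
qed

lemma pair_mono:
  fixes u v :: "'a::real_inner"
  assumes "0 \<le> a" "0 \<le> b" "0 \<le> c" "0 \<le> d"
    and "(a * norm u - b * norm v) * (c * norm u - d * norm v) \<ge> 0"
  shows "inner (a *\<^sub>R u - b *\<^sub>R v) (c *\<^sub>R u - d *\<^sub>R v) \<ge> 0"
proof -
  have cs: "inner u v \<le> norm u * norm v" by (rule norm_cauchy_schwarz)
  have e: "inner (a *\<^sub>R u - b *\<^sub>R v) (c *\<^sub>R u - d *\<^sub>R v)
      = a*c*(norm u)\<^sup>2 + b*d*(norm v)\<^sup>2 - (a*d + b*c) * inner u v"
    by (simp add: inner_diff inner_commute power2_norm_eq_inner algebra_simps)
  have "(a*d + b*c) * inner u v \<le> (a*d+b*c) * (norm u * norm v)"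
    using assms cs by (intro mult_left_mono) auto
  then show ?thesis using e assms(5)
    by (simp add: algebra_simps power2_eq_square)
qed

lemma G_mono:
  fixes u v :: "'a::real_inner"
  assumes "Gu = a *\<^sub>R u" "Gv = b *\<^sub>R v" "m \<le> a" "m \<le> b"
    and "a * norm u = gu" "b * norm v = gv"
    and "m * (norm u - norm v)\<^sup>2 \<le> (gu - gv) * (norm u - norm v)"
  shows "m * (norm (u - v))\<^sup>2 \<le> inner (u - v) (Gu - Gv)"
proof -
  have cs: "inner u v \<le> norm u * norm v" by (rule norm_cauchy_schwarz)
  have e1: "inner (u - v) (Gu - Gv) = a*(norm u)\<^sup>2 + b*(norm v)\<^sup>2 - (a + b) * inner u v"
    using assms(1,2) by (simp add: inner_diff inner_commute power2_norm_eq_inner algebra_simps)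
  have e2: "(norm (u - v))\<^sup>2 = (norm u)\<^sup>2 + (norm v)\<^sup>2 - 2 * inner u v"
    by (simp add: inner_diff inner_commute power2_norm_eq_inner algebra_simps)
  have "(a + b - 2*m) * inner u v \<le> (a + b - 2*m) * (norm u * norm v)"
    using assms cs by (intro mult_left_mono) auto
  moreover have "(gu - gv) * (norm u - norm v) = a*(norm u)\<^sup>2 + b*(norm v)\<^sup>2 - (a+b)*(norm u * norm v)"
    using assms(5,6)[symmetric] by (simp add: algebra_simps power2_eq_square)
  ultimately show ?thesis unfolding e1 e2 using assms(7)
    by (simp only: algebra_simps power2_eq_square; linarith)
qed

lemma G_lip:
  fixes u v :: "'a::real_inner"
  assumes "Gu = a *\<^sub>R u" "Gv = b *\<^sub>R v" "0 \<le> a" "0 \<le> b" "a \<le> M" "b \<le> M"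
    and "a * norm u = gu" "b * norm v = gv"
    and "\<bar>gu - gv\<bar> \<le> M * \<bar>norm u - norm v\<bar>"
  shows "norm (Gu - Gv) \<le> M * norm (u - v)"
proof -
  have cs: "inner u v \<le> norm u * norm v" by (rule norm_cauchy_schwarz)
  have M0: "0 \<le> M" using assms by linarith
  have e1: "(norm (Gu - Gv))\<^sup>2 = a*a*(norm u)\<^sup>2 + b*b*(norm v)\<^sup>2 - 2*a*b * inner u v"
    using assms(1,2) by (simp add: inner_diff inner_commute power2_norm_eq_inner algebra_simps)
  have e2: "(norm (u - v))\<^sup>2 = (norm u)\<^sup>2 + (norm v)\<^sup>2 - 2 * inner u v"
    by (simp add: inner_diff inner_commute power2_norm_eq_inner algebra_simps)
  have ab: "a * b \<le> M * M" using assms by (intro mult_mono) auto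
  have "(M*M - a*b) * inner u v \<le> (M*M - a*b) * (norm u * norm v)"
    using ab cs by (intro mult_left_mono) auto
  moreover have "(gu - gv)\<^sup>2 \<le> (M * (norm u - norm v))\<^sup>2"
  proof -
    have "\<bar>gu - gv\<bar> \<le> \<bar>M * (norm u - norm v)\<bar>" using assms(9) M0 by (simp add: abs_mult)
    then show ?thesis by (simp add: abs_le_square_iff)
  qed
  moreover have "(gu - gv)\<^sup>2 = a*a*(norm u)\<^sup>2 + b*b*(norm v)\<^sup>2 - 2*a*b*(norm u * norm v)"
    using assms(7,8)[symmetric] by (simp add: algebra_simps power2_eq_square)
  ultimately have "(norm (Gu - Gv))\<^sup>2 \<le> (M * norm (u - v))\<^sup>2"
    unfolding power_mult_distrib e1 e2 by (simp only: algebra_simps power2_eq_square; linarith)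
  then show ?thesis using M0 by (simp add: power2_le_iff_abs_le)
qed

lemma sym_sum:
  fixes X Y :: "nat \<Rightarrow> 'a::real_inner"
  assumes "finite I" "\<And>i k. w i k = w k i"
  shows "(\<Sum>i\<in>I. \<Sum>k\<in>I. w i k * inner (X i) (Y k - Y i))
       = -(1/2) * (\<Sum>i\<in>I. \<Sum>k\<in>I. w i k * inner (X k - X i) (Y k - Y i))"
proof -
  let ?S = "(\<Sum>i\<in>I. \<Sum>k\<in>I. w i k * inner (X i) (Y k - Y i))"
  have "?S = (\<Sum>k\<in>I. \<Sum>i\<in>I. w i k * inner (X i) (Y k - Y i))"
    by (rule sum.swap)
  also have "\<dots> = (\<Sum>i\<in>I. \<Sum>k\<in>I. - (w i k * inner (X k) (Y k - Y i)))"
    by (intro sum.cong refl) (metis assms(2) inner_minus_right minus_diff_eq mult_minus_right)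
  finally have "2 * ?S = ?S + (\<Sum>i\<in>I. \<Sum>k\<in>I. - (w i k * inner (X k) (Y k - Y i)))" by simp
  also have "\<dots> = (\<Sum>i\<in>I. \<Sum>k\<in>I. - (w i k * inner (X k - X i) (Y k - Y i)))"
    by (simp add: sum.distrib[symmetric] inner_diff_left algebra_simps)
  finally show ?thesis by (simp add: sum_negf)
qed

lemma sym_sum_vec:
  fixes Y :: "nat \<Rightarrow> 'a::real_vector"
  assumes "finite I" "\<And>i k. w i k = w k i"
  shows "(\<Sum>i\<in>I. \<Sum>k\<in>I. w i k *\<^sub>R (Y k - Y i)) = 0"
proof -
  let ?S = "(\<Sum>i\<in>I. \<Sum>k\<in>I. w i k *\<^sub>R (Y k - Y i))"
  have "?S = (\<Sum>k\<in>I. \<Sum>i\<in>I. w i k *\<^sub>R (Y k - Y i))"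
    by (rule sum.swap)
  also have "\<dots> = (\<Sum>i\<in>I. \<Sum>k\<in>I. - (w i k *\<^sub>R (Y k - Y i)))"
  proof (intro sum.cong refl)
    fix i k
    show "w k i *\<^sub>R (Y i - Y k) = - (w i k *\<^sub>R (Y k - Y i))"
      using assms(2)[of k i] by (simp add: scaleR_diff_right)
  qed
  also have "\<dots> = - ?S" by (simp add: sum_negf)
  finally have "?S = - ?S" .
  then have "?S + ?S = 0" by (simp add: eq_neg_iff_add_eq_0)
  then have "2 *\<^sub>R ?S = 0" by (simp add: scaleR_2)
  then show ?thesis by simp
qed

lemma pairs_expand:
  fixes x y :: "nat \<Rightarrow> 'a::real_inner"
  assumes "finite I"
  shows "(\<Sum>i\<in>I. \<Sum>j\<in>I. inner (x i - x j) (y i - y j))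
     = 2 * real (card I) * (\<Sum>i\<in>I. inner (x i) (y i)) - 2 * inner (sum x I) (sum y I)"
proof -
  have "(\<Sum>i\<in>I. \<Sum>j\<in>I. inner (x i - x j) (y i - y j))
     = (\<Sum>i\<in>I. \<Sum>j\<in>I. inner (x i) (y i)) - (\<Sum>i\<in>I. \<Sum>j\<in>I. inner (x i) (y j))
       - (\<Sum>i\<in>I. \<Sum>j\<in>I. inner (x j) (y i)) + (\<Sum>i\<in>I. \<Sum>j\<in>I. inner (x j) (y j))"
    by (simp only: inner_diff_left inner_diff_right sum_subtractf sum.distrib)
  also have "(\<Sum>i\<in>I. \<Sum>j\<in>I. inner (x i) (y i)) = real (card I) * (\<Sum>i\<in>I. inner (x i) (y i))"
    by (simp add: sum_distrib_left)
  also have "(\<Sum>i\<in>I. \<Sum>j\<in>I. inner (x j) (y j)) = real (card I) * (\<Sum>i\<in>I. inner (x i) (y i))"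
    by simp
  also have "(\<Sum>i\<in>I. \<Sum>j\<in>I. inner (x i) (y j)) = inner (sum x I) (sum y I)"
    unfolding inner_sum_left unfolding inner_sum_right ..
  also have "(\<Sum>i\<in>I. \<Sum>j\<in>I. inner (x j) (y i)) = inner (sum x I) (sum y I)"
  proof -
    have "(\<Sum>i\<in>I. \<Sum>j\<in>I. inner (x j) (y i)) = (\<Sum>j\<in>I. \<Sum>i\<in>I. inner (x j) (y i))"
      by (rule sum.swap)
    then show ?thesis unfolding inner_sum_left unfolding inner_sum_right .
  qed
  finally show ?thesis by simp
qed

lemma g_cont:
  assumes "\<And>r. r \<ge> 0 \<Longrightarrow> (g has_real_derivative dg r) (at r within {0..})"
  shows "continuous_on {0..} g"
  using assms by (metis DERIV_continuous atLeast_iff continuous_on_eq_continuous_within)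

lemma g_at:
  assumes "\<And>r. r \<ge> 0 \<Longrightarrow> (g has_real_derivative dg r) (at r within {0..})" "r > 0"
  shows "(g has_real_derivative dg r) (at r)"
proof -
  have "interior {0::real..} = {0<..}" by (rule interior_Ici[of "-1"]) simp
  then have "at r within {0..} = at r" using assms(2) by (intro at_within_interior) simp
  then show ?thesis using assms(1)[of r] assms(2) by simp
qed

lemma g_mvt:
  assumes gd: "\<And>r. r \<ge> 0 \<Longrightarrow> (g has_real_derivative dg r) (at r within {0..})"
    and s0: "0 \<le> s" and sr0: "s \<le> r"
  obtains z where "s \<le> z" "z \<le> r" "g r - g s = (r - s) * dg z"
proof (cases "s = r")
  case True then show ?thesis using that[of s] by auto
next
  case False
  then have sr: "s < r" using sr0 by auto
  have c0: "continuous_on {0..} g" by (rule g_cont) (rule gd)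
  have c: "continuous_on {s..r} g"
    by (rule continuous_on_subset[OF c0]) (use s0 in auto)
  have d: "g differentiable (at x)" if "s < x" "x < r" for x
  proof -
    have "x > 0" using that s0 by linarith
    then have "DERIV g x :> dg x" by (intro g_at[where dg=dg] gd)
    then show ?thesis using real_differentiable_def by blast
  qed
  have "\<exists>l z. s < z \<and> z < r \<and> DERIV g z :> l \<and> g r - g s = (r - s) * l"
    by (rule MVT[OF sr c d])
  then obtain l z where z: "s < z" "z < r" "DERIV g z :> l" "g r - g s = (r - s) * l" by blast
  have "l = dg z" using DERIV_unique[OF z(3) g_at[where dg=dg and r=z, OF gd]] z s0 by auto
  then show ?thesis using that[of z] z by auto
qed

lemma eps_le:
  fixes X A B :: real
  assumes "B \<ge> 0" "\<And>s. s > 0 \<Longrightarrow> X \<le> A + B * s"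
  shows "X \<le> A"
proof (rule ccontr)
  assume "\<not> X \<le> A"
  then have d: "X - A > 0" by simp
  define s where "s = (X - A) / (2 * (B + 1))"
  have s0: "s > 0" using d assms(1) by (simp add: s_def)
  have "B * s < X - A"
  proof -
    have "B * s \<le> (B + 1) * s" using s0 by (simp add: algebra_simps)
    also have "\<dots> = (X - A) / 2" using assms(1) by (simp add: s_def field_simps)
    also have "\<dots> < X - A" using d by simp
    finally show ?thesis .
  qed
  then show False using assms(2)[OF s0] by simp
qed

lemma cs_double:
  fixes a b :: "nat \<Rightarrow> nat \<Rightarrow> real"
  assumes "finite I" "\<And>i j. 0 \<le> a i j" "\<And>i j. 0 \<le> b i j"
  shows "(\<Sum>i\<in>I. \<Sum>j\<in>I. a i j * b i j)
     \<le> sqrt (\<Sum>i\<in>I. \<Sum>j\<in>I. (a i j)\<^sup>2) * sqrt (\<Sum>i\<in>I. \<Sum>j\<in>I. (b i j)\<^sup>2)"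
proof -
  have "(\<Sum>x\<in>I \<times> I. \<bar>case_prod a x\<bar> * \<bar>case_prod b x\<bar>) \<le> L2_set (case_prod a) (I \<times> I) * L2_set (case_prod b) (I \<times> I)"
    by (rule L2_set_mult_ineq)
  moreover have e: "(\<Sum>i\<in>I. \<Sum>j\<in>I. a i j * b i j) = (\<Sum>x\<in>I \<times> I. \<bar>case_prod a x\<bar> * \<bar>case_prod b x\<bar>)"
    by (subst sum.cartesian_product) (auto intro!: sum.cong simp: assms abs_of_nonneg)
  moreover have c: "\<And>c. (\<Sum>i\<in>I. \<Sum>j\<in>I. (c i j)\<^sup>2) = (\<Sum>x\<in>I \<times> I. (case_prod c x)\<^sup>2)"
    by (subst sum.cartesian_product) (auto intro!: sum.cong)
  ultimately show ?thesis unfolding L2_set_def by (simp only: e c[of a] c[of b])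
qed

lemma bootstrap:
  fixes h :: "'k \<Rightarrow> real \<Rightarrow> real"
  assumes fin: "finite K" and cont: "\<And>k. k \<in> K \<Longrightarrow> continuous_on {0..} (h k)"
    and init: "\<And>k. k \<in> K \<Longrightarrow> h k 0 > 0"
    and step: "\<And>T. T \<ge> 0 \<Longrightarrow> \<forall>t\<in>{0..T}. \<forall>k\<in>K. h k t \<ge> 0 \<Longrightarrow> \<forall>t\<in>{0..T}. \<forall>k\<in>K. h k t > 0"
  shows "\<forall>t\<ge>0. \<forall>k\<in>K. h k t > 0"
proof (rule ccontr)
  assume "\<not> ?thesis"
  then obtain t1 k1 where t1: "t1 \<ge> 0" "k1 \<in> K" "h k1 t1 \<le> 0" by force
  define C where "C = (\<Union>k\<in>K. {0..t1} \<inter> h k -` {..0})"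
  have cC: "closed C" unfolding C_def
  proof (intro closed_UN fin ballI)
    fix k assume "k \<in> K"
    have "continuous_on {0..t1} (h k)" using cont[OF \<open>k \<in> K\<close>] by (rule continuous_on_subset) auto
    then show "closed ({0..t1} \<inter> h k -` {..0})"
      by (rule continuous_closed_preimage) auto
  qed
  have "t1 \<in> {0..t1} \<inter> h k1 -` {..0}" using t1 by simp
  then have "t1 \<in> C" unfolding C_def using t1(2) by (rule UN_I[rotated])
  then have neC: "C \<noteq> {}" by blast
  have bC: "bdd_below C" by (rule bdd_belowI[of _ 0]) (auto simp: C_def)
  define T where "T = Inf C"
  have TC: "T \<in> C" unfolding T_def by (rule closed_contains_Inf[OF neC bC cC])
  from TC obtain kT where kT: "kT \<in> K" "h kT T \<le> 0" "T \<in> {0..t1}" unfolding C_def by blast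
  then have T0: "T \<ge> 0" "T \<le> t1" by auto
  have below: "h k t > 0" if "k \<in> K" "0 \<le> t" "t < T" for k t
  proof (rule ccontr)
    assume "\<not> h k t > 0"
    then have "t \<in> C" using that T0 unfolding C_def by force
    then have "T \<le> t" unfolding T_def by (rule cInf_lower[OF _ bC])
    then show False using that by simp
  qed
  have Tpos: "T > 0"
  proof (rule ccontr)
    assume "\<not> T > 0"
    then have "T = 0" using T0 by simp
    then show False using kT init[OF kT(1)] by simp
  qed
  have "\<forall>t\<in>{0..T}. \<forall>k\<in>K. h k t \<ge> 0"
  proof (intro ballI)
    fix t k assume t: "t \<in> {0..T}" and k: "k \<in> K"
    have c: "continuous_on {0..T} (h k)" using cont[OF k] by (rule continuous_on_subset) auto
    have cl: "closed ({0..T} \<inter> h k -` {0..})"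
      by (rule continuous_closed_preimage[OF c]) auto
    have "{0..<T} \<subseteq> {0..T} \<inter> h k -` {0..}"
      using below[OF k] by (auto simp: less_imp_le)
    then have "closure {0..<T} \<subseteq> {0..T} \<inter> h k -` {0..}"
      by (rule closure_minimal[OF _ cl])
    then show "h k t \<ge> 0" using t Tpos by auto
  qed
  then have "\<forall>t\<in>{0..T}. \<forall>k\<in>K. h k t > 0" using step T0 by blast
  then show False using kT T0 by force
qed

lemma hder:
  fixes c y :: real
  shows "((\<lambda>y. (max 0 (y - c))\<^sup>2) has_real_derivative 2 * max 0 (y - c)) (at y)"
proof -
  consider "y > c" | "y < c" | "y = c" by linarith
  then show ?thesis
  proof cases
    case 1
    have "((\<lambda>y. (y - c)\<^sup>2) has_real_derivative 2 * (y - c)) (at y)"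
      by (auto intro!: derivative_eq_intros)
    then have "((\<lambda>y. (max 0 (y - c))\<^sup>2) has_real_derivative 2 * (y - c)) (at y)"
      by (rule has_field_derivative_transform_within_open[of _ _ _ "{c<..}"]) (use 1 in auto)
    then show ?thesis using 1 by simp
  next
    case 2
    have "((\<lambda>y. 0) has_real_derivative 0) (at y)" by simp
    then have "((\<lambda>y. (max 0 (y - c))\<^sup>2) has_real_derivative 0) (at y)"
      by (rule has_field_derivative_transform_within_open[of _ _ _ "{..<c}"]) (use 2 in auto)
    then show ?thesis using 2 by simp
  next
    case 3
    have "(\<lambda>h. ((max 0 (y + h - c))\<^sup>2 - (max 0 (y - c))\<^sup>2) / h) \<midarrow>0\<rightarrow> 0"
    proof (rule Lim_null_comparison)
      show "\<forall>\<^sub>F h in at 0. norm (((max 0 (y + h - c))\<^sup>2 - (max 0 (y - c))\<^sup>2) / h) \<le> \<bar>h\<bar>"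
      proof (rule always_eventually, rule allI)
        fix h :: real
        show "norm (((max 0 (y + h - c))\<^sup>2 - (max 0 (y - c))\<^sup>2) / h) \<le> \<bar>h\<bar>"
        proof (cases "h > 0")
          case True then show ?thesis using 3 by (simp add: power2_eq_square)
        next
          case False then show ?thesis using 3 by simp
        qed
      qed
      show "((\<lambda>h. \<bar>h\<bar>) \<longlongrightarrow> 0) (at (0::real))"
        by (rule tendsto_rabs_zero) (rule tendsto_ident_at)
    qed
    then show ?thesis using 3 by (simp add: DERIV_def)
  qed
qed

locale cs =
  fixes N :: nat and \<kappa> :: real and g dg \<psi> :: "real \<Rightarrow> real"
    and q p :: "nat \<Rightarrow> real \<Rightarrow> 'a::euclidean_space"
  assumes N2: "N \<ge> 2" and kp: "\<kappa> > 0"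
    and gd: "\<And>r. r \<ge> 0 \<Longrightarrow> (g has_real_derivative dg r) (at r within {0..})"
    and g0: "g 0 = 0"
    and dgb: "\<And>b. \<exists>m M'. 0 < m \<and> (\<forall>r\<in>{0..b}. m \<le> dg r \<and> dg r \<le> M')"
    and psi_pos: "\<And>r. r > 0 \<Longrightarrow> \<psi> r > 0"
    and psi_bdd: "bounded (\<psi> ` {0<..})"
    and psi_lip: "\<exists>L. \<forall>r>0. \<forall>s>0. \<bar>\<psi> r - \<psi> s\<bar> \<le> L * \<bar>r - s\<bar>"
    and psi_mono: "\<And>r s. 0 < r \<Longrightarrow> r \<le> s \<Longrightarrow> \<psi> s \<le> \<psi> r"
    and q_cont: "\<And>i. i \<in> {1..N} \<Longrightarrow> continuous_on {0..} (q i)"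
    and p_cont: "\<And>i. i \<in> {1..N} \<Longrightarrow> continuous_on {0..} (p i)"
    and q_ode: "\<And>i t. i \<in> {1..N} \<Longrightarrow> t > 0 \<Longrightarrow>
                  (q i has_vector_derivative velG g (p i t)) (at t)"
    and p_ode: "\<And>i t. i \<in> {1..N} \<Longrightarrow> t > 0 \<Longrightarrow>
                  (p i has_vector_derivative
                     (\<kappa> / real N) *\<^sub>R (\<Sum>k\<in>{1..N}. \<psi> (norm (q k t - q i t)) *\<^sub>R
                         (velG g (p k t) - velG g (p i t)))) (at t)"
begin

definition "I = {1..N}"
definition "Gp i t = velG g (p i t)"
definition "w i k t = \<psi> (norm (q k t - q i t))"
definition "v i t = (\<kappa> / real N) *\<^sub>R (\<Sum>k\<in>I. w i k t *\<^sub>R (Gp k t - Gp i t))"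
definition "E t = (\<Sum>i\<in>I. \<Sum>j\<in>I. (norm (p i t - p j t))\<^sup>2)"
definition "D t = (\<Sum>i\<in>I. \<Sum>j\<in>I. (norm (q i t - q j t))\<^sup>2)"

lemma finI: "finite I" and cardI: "card I = N" by (auto simp: I_def)

lemma w_sym: "w i k t = w k i t"
  by (simp add: w_def norm_minus_commute)

lemma p_der: "i \<in> I \<Longrightarrow> t > 0 \<Longrightarrow> (p i has_vector_derivative v i t) (at t)"
  using p_ode by (simp add: v_def I_def w_def Gp_def)

lemma q_der: "i \<in> I \<Longrightarrow> t > 0 \<Longrightarrow> (q i has_vector_derivative Gp i t) (at t)"
  using q_ode by (simp add: I_def Gp_def)

lemma sum_v: "(\<Sum>i\<in>I. v i t) = 0"
proof -
  have "(\<Sum>i\<in>I. v i t) = (\<kappa> / real N) *\<^sub>R (\<Sum>i\<in>I. \<Sum>k\<in>I. w i k t *\<^sub>R (Gp k t - Gp i t))"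
    by (simp add: v_def scaleR_sum_right)
  also have "(\<Sum>i\<in>I. \<Sum>k\<in>I. w i k t *\<^sub>R (Gp k t - Gp i t)) = 0"
    by (rule sym_sum_vec[OF finI]) (rule w_sym)
  finally show ?thesis by simp
qed

lemma sum_inner_v:
  fixes X :: "nat \<Rightarrow> 'a"
  shows "(\<Sum>i\<in>I. inner (X i) (v i t)) = - (\<kappa> / (2 * real N)) *
     (\<Sum>i\<in>I. \<Sum>k\<in>I. w i k t * inner (X k - X i) (Gp k t - Gp i t))"
proof -
  have "(\<Sum>i\<in>I. inner (X i) (v i t)) = (\<kappa> / real N) * (\<Sum>i\<in>I. \<Sum>k\<in>I. w i k t * inner (X i) (Gp k t - Gp i t))"
    by (simp add: v_def inner_sum_right sum_distrib_left)
  also have "(\<Sum>i\<in>I. \<Sum>k\<in>I. w i k t * inner (X i) (Gp k t - Gp i t))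
     = -(1/2) * (\<Sum>i\<in>I. \<Sum>k\<in>I. w i k t * inner (X k - X i) (Gp k t - Gp i t))"
    by (rule sym_sum[OF finI]) (rule w_sym)
  finally show ?thesis by simp
qed

lemma E_der:
  assumes "t > 0"
  shows "(E has_real_derivative (-2 * \<kappa> * (\<Sum>i\<in>I. \<Sum>k\<in>I. w i k t * inner (p k t - p i t) (Gp k t - Gp i t)))) (at t)"
proof -
  have "(E has_real_derivative (\<Sum>i\<in>I. \<Sum>j\<in>I. 2 * inner (p i t - p j t) (v i t - v j t))) (at t)"
    unfolding E_def
  proof (intro DERIV_sum)
    fix i j assume "i \<in> I" "j \<in> I"
    then have "((\<lambda>t. p i t - p j t) has_vector_derivative (v i t - v j t)) (at t)"
      using p_der assms by (intro has_vector_derivative_diff) auto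
    then show "((\<lambda>t. (norm (p i t - p j t))\<^sup>2) has_real_derivative 2 * inner (p i t - p j t) (v i t - v j t)) (at t)"
      by (rule deriv_norm_sq)
  qed
  moreover have "(\<Sum>i\<in>I. \<Sum>j\<in>I. 2 * inner (p i t - p j t) (v i t - v j t))
     = 2 * (2 * real N * (\<Sum>i\<in>I. inner (p i t) (v i t)) - 2 * inner (\<Sum>i\<in>I. p i t) (\<Sum>i\<in>I. v i t))"
    using pairs_expand[OF finI, of "\<lambda>i. p i t" "\<lambda>i. v i t"]
    by (simp add: sum_distrib_left[symmetric] cardI)
  moreover have "real N > 0" using N2 by simp
  ultimately show ?thesis by (simp add: sum_v sum_inner_v mult.assoc)
qed

lemma D_der:
  assumes "t > 0"
  shows "(D has_real_derivative (\<Sum>i\<in>I. \<Sum>j\<in>I. 2 * inner (q i t - q j t) (Gp i t - Gp j t))) (at t)"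
  unfolding D_def
proof (intro DERIV_sum)
  fix i j assume "i \<in> I" "j \<in> I"
  then have "((\<lambda>t. q i t - q j t) has_vector_derivative (Gp i t - Gp j t)) (at t)"
    using q_der assms by (intro has_vector_derivative_diff) auto
  then show "((\<lambda>t. (norm (q i t - q j t))\<^sup>2) has_real_derivative 2 * inner (q i t - q j t) (Gp i t - Gp j t)) (at t)"
    by (rule deriv_norm_sq)
qed

end

context cs begin

lemma g_bounds:
  assumes "\<forall>z\<in>{0..b}. m \<le> dg z \<and> dg z \<le> M" "0 \<le> s" "s \<le> r" "r \<le> b"
  shows "m * (r - s) \<le> g r - g s" "g r - g s \<le> M * (r - s)"
proof -
  obtain z where z: "s \<le> z" "z \<le> r" "g r - g s = (r - s) * dg z"
    using g_mvt[OF gd assms(2,3)] by blast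
  have "m \<le> dg z" "dg z \<le> M" using assms z by auto
  then show "m * (r - s) \<le> g r - g s" "g r - g s \<le> M * (r - s)"
    using z(3) assms(3) by (simp_all add: mult.commute mult_right_mono)
qed

lemma g_mono: "0 \<le> s \<Longrightarrow> s \<le> r \<Longrightarrow> g s \<le> g r"
proof -
  assume a: "0 \<le> s" "s \<le> r"
  obtain m M' where "0 < m" "\<forall>z\<in>{0..r}. m \<le> dg z \<and> dg z \<le> M'" using dgb[of r] by blast
  then have "m * (r - s) \<le> g r - g s" using g_bounds a by blast
  moreover have "0 \<le> m * (r - s)" using \<open>0 < m\<close> a by simp
  ultimately show ?thesis by linarith
qed

lemma g_nonneg: "0 \<le> r \<Longrightarrow> 0 \<le> g r"
  using g_mono[of 0 r] g0 by simp

lemma Gp_rep: "Gp i t = (g (norm (p i t)) / norm (p i t)) *\<^sub>R p i t"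
  by (simp add: Gp_def velG_eq)

lemma gam_mul: "(g (norm x) / norm x) * norm x = g (norm x)"
  by (cases "x = 0") (auto simp: g0)

lemma maxp:
  assumes T0: "T \<ge> 0"
    and nocol: "\<forall>t\<in>{0..T}. \<forall>i\<in>I. \<forall>k\<in>I. i \<noteq> k \<longrightarrow> q i t \<noteq> q k t"
    and init: "\<forall>i\<in>I. norm (p i 0) \<le> R" and R0: "R \<ge> 0"
  shows "\<forall>t\<in>{0..T}. \<forall>i\<in>I. norm (p i t) \<le> R"
proof -
  define a where "a i t = max 0 ((norm (p i t))\<^sup>2 - R\<^sup>2)" for i t
  define \<Phi> where "\<Phi> t = (\<Sum>i\<in>I. (a i t)\<^sup>2)" for t
  have Phi_der: "(\<Phi> has_real_derivative
      (- (2 * \<kappa> / real N) * (\<Sum>i\<in>I. \<Sum>k\<in>I. w i k t * inner (a k t *\<^sub>R p k t - a i t *\<^sub>R p i t) (Gp k t - Gp i t)))) (at t)"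
    if "t > 0" for t
  proof -
    have dd: "(\<Phi> has_real_derivative (\<Sum>i\<in>I. (2 * a i t) * (2 * inner (p i t) (v i t)))) (at t)"
      unfolding \<Phi>_def a_def
    proof (intro DERIV_sum)
      fix i assume i: "i \<in> I"
      show "((\<lambda>x. (max 0 ((norm (p i x))\<^sup>2 - R\<^sup>2))\<^sup>2) has_real_derivative
          2 * max 0 ((norm (p i t))\<^sup>2 - R\<^sup>2) * (2 * inner (p i t) (v i t))) (at t)"
        by (rule DERIV_chain2[OF hder deriv_norm_sq[OF p_der[OF i that]]])
    qed
    have e1: "(\<Sum>i\<in>I. (2 * a i t) * (2 * inner (p i t) (v i t)))
        = 4 * (\<Sum>i\<in>I. inner (a i t *\<^sub>R p i t) (v i t))"
      by (simp add: sum_distrib_left algebra_simps)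
    have e2: "(\<Sum>i\<in>I. inner (a i t *\<^sub>R p i t) (v i t)) = - (\<kappa> / (2 * real N)) *
     (\<Sum>i\<in>I. \<Sum>k\<in>I. w i k t * inner (a k t *\<^sub>R p k t - a i t *\<^sub>R p i t) (Gp k t - Gp i t))"
      by (rule sum_inner_v)
    have "(\<Sum>i\<in>I. (2 * a i t) * (2 * inner (p i t) (v i t))) = - (2 * \<kappa> / real N) *
     (\<Sum>i\<in>I. \<Sum>k\<in>I. w i k t * inner (a k t *\<^sub>R p k t - a i t *\<^sub>R p i t) (Gp k t - Gp i t))"
      unfolding e1 e2 by simp
    then show ?thesis using dd by simp
  qed
  have term_nonneg: "0 \<le> w i k t * inner (a k t *\<^sub>R p k t - a i t *\<^sub>R p i t) (Gp k t - Gp i t)"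
    if t: "t \<in> {0..T}" and i: "i \<in> I" and k: "k \<in> I" for i k t
  proof (cases "i = k")
    case True then show ?thesis by simp
  next
    case False
    then have "q k t - q i t \<noteq> 0" using nocol t i k by auto
    then have w0: "w i k t > 0" unfolding w_def by (intro psi_pos) simp
    let ?r = "norm (p k t)" and ?s = "norm (p i t)"
    have A: "(a k t * ?r - a i t * ?s) * (g ?r - g ?s) \<ge> 0"
    proof (cases "?s \<le> ?r")
      case True
      have sq: "?s\<^sup>2 \<le> ?r\<^sup>2" using True by (simp add: power_mono)
      have "a i t \<le> a k t" unfolding a_def by (rule max.mono) (use sq in auto)
      then have "a i t * ?s \<le> a k t * ?r" using True by (intro mult_mono) (auto simp: a_def)
      moreover have "g ?s \<le> g ?r" using True by (intro g_mono) auto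
      ultimately show ?thesis by simp
    next
      case False
      then have F: "?r \<le> ?s" by simp
      have sq: "?r\<^sup>2 \<le> ?s\<^sup>2" using F by (simp add: power_mono)
      have "a k t \<le> a i t" unfolding a_def by (rule max.mono) (use sq in auto)
      then have "a k t * ?r \<le> a i t * ?s" using F by (intro mult_mono) (auto simp: a_def)
      moreover have "g ?r \<le> g ?s" using F by (intro g_mono) auto
      ultimately show ?thesis by (simp add: mult_nonpos_nonpos)
    qed
    have "inner (a k t *\<^sub>R p k t - a i t *\<^sub>R p i t)
        ((g ?r / ?r) *\<^sub>R p k t - (g ?s / ?s) *\<^sub>R p i t) \<ge> 0"
    proof (rule pair_mono)
      show "0 \<le> a k t" "0 \<le> a i t" by (auto simp: a_def)
      show "0 \<le> g ?r / ?r" by (simp add: g_nonneg)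
      show "0 \<le> g ?s / ?s" by (simp add: g_nonneg)
      show "0 \<le> (a k t * ?r - a i t * ?s) * (g ?r / ?r * ?r - g ?s / ?s * ?s)"
        using A by (simp only: gam_mul)
    qed
    then show ?thesis using w0 by (simp add: Gp_rep)
  qed
  have Phi0: "\<Phi> 0 = 0"
  proof -
    have "a i 0 = 0" if "i \<in> I" for i
    proof -
      have "(norm (p i 0))\<^sup>2 \<le> R\<^sup>2" using init that by (intro power_mono) auto
      then show ?thesis by (simp add: a_def)
    qed
    then show ?thesis by (simp add: \<Phi>_def)
  qed
  show ?thesis
  proof (intro ballI)
    fix t i assume t: "t \<in> {0..T}" and i: "i \<in> I"
    have cp: "continuous_on {0..t} (p j)" if "j \<in> I" for j
      using p_cont[of j] that by (auto simp: I_def intro: continuous_on_subset)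
    have "\<Phi> t \<le> \<Phi> 0"
    proof (rule DERIV_nonpos_imp_decreasing_open[of 0 t \<Phi>])
      show "0 \<le> t" using t by simp
      show "continuous_on {0..t} \<Phi>" unfolding \<Phi>_def a_def
        by (intro continuous_intros cp)
      fix x assume x: "0 < x" "x < t"
      have "(- (2 * \<kappa> / real N) * (\<Sum>i\<in>I. \<Sum>k\<in>I. w i k x * inner (a k x *\<^sub>R p k x - a i x *\<^sub>R p i x) (Gp k x - Gp i x))) \<le> 0"
      proof -
        have "0 \<le> (\<Sum>i\<in>I. \<Sum>k\<in>I. w i k x * inner (a k x *\<^sub>R p k x - a i x *\<^sub>R p i x) (Gp k x - Gp i x))"
          using x t by (intro sum_nonneg term_nonneg) auto
        moreover have "0 \<le> 2 * \<kappa> / real N" using kp by simp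
        ultimately have "0 \<le> (2 * \<kappa> / real N) * (\<Sum>i\<in>I. \<Sum>k\<in>I. w i k x * inner (a k x *\<^sub>R p k x - a i x *\<^sub>R p i x) (Gp k x - Gp i x))"
          by (intro mult_nonneg_nonneg)
        then show ?thesis by (simp only: mult_minus_left neg_le_0_iff_le)
      qed
      then show "\<exists>y. (\<Phi> has_real_derivative y) (at x) \<and> y \<le> 0"
        using Phi_der[OF x(1)] by blast
    qed
    then have "\<Phi> t \<le> 0" using Phi0 by simp
    moreover have "(a i t)\<^sup>2 \<le> \<Phi> t" unfolding \<Phi>_def
      using i finI by (intro member_le_sum) auto
    ultimately have "(a i t)\<^sup>2 \<le> 0" by linarith
    then have "a i t = 0" by simp
    then have "(norm (p i t))\<^sup>2 \<le> R\<^sup>2" by (simp add: a_def)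
    then show "norm (p i t) \<le> R" using R0 by (simp add: power2_le_iff_abs_le)
  qed
qed

end

context cs begin

lemma psi_cont: "continuous_on {0<..} \<psi>"
proof -
  obtain L where L: "\<forall>r>0. \<forall>s>0. \<bar>\<psi> r - \<psi> s\<bar> \<le> L * \<bar>r - s\<bar>" using psi_lip by blast
  have "(max L 0)-lipschitz_on {0<..} \<psi>"
  proof (rule lipschitz_onI)
    fix x y :: real assume "x \<in> {0<..}" "y \<in> {0<..}"
    then have "\<bar>\<psi> x - \<psi> y\<bar> \<le> L * \<bar>x - y\<bar>" using L by auto
    also have "\<dots> \<le> max L 0 * \<bar>x - y\<bar>" by (intro mult_right_mono) auto
    finally show "dist (\<psi> x) (\<psi> y) \<le> max L 0 * dist x y" by (simp add: dist_real_def)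
  qed simp
  then show ?thesis by (rule lipschitz_on_continuous_on)
qed

lemma psi_bound: obtains B where "B \<ge> 0" "\<And>r. r > 0 \<Longrightarrow> \<psi> r \<le> B"
proof -
  obtain B where "\<forall>x\<in>\<psi> ` {0<..}. norm x \<le> B" using psi_bdd by (auto simp: bounded_iff)
  then have "\<And>r. r > 0 \<Longrightarrow> \<psi> r \<le> B" by force
  moreover have "B \<ge> 0" using calculation[of 1] psi_pos[of 1] by simp
  ultimately show ?thesis using that by blast
qed

lemma D_cont: "continuous_on {0..} D"
  unfolding D_def by (intro continuous_intros) (auto simp: I_def intro: q_cont)

lemma E_cont: "continuous_on {0..} E"
  unfolding E_def by (intro continuous_intros) (auto simp: I_def intro: p_cont)

lemma E_nonneg: "E t \<ge> 0" unfolding E_def by (intro sum_nonneg) auto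

lemma term_le_E: "i \<in> I \<Longrightarrow> j \<in> I \<Longrightarrow> (norm (p i t - p j t))\<^sup>2 \<le> E t"
proof -
  assume i: "i \<in> I" and j: "j \<in> I"
  have "(norm (p i t - p j t))\<^sup>2 \<le> (\<Sum>j\<in>I. (norm (p i t - p j t))\<^sup>2)"
    using j finI by (intro member_le_sum) auto
  also have "\<dots> \<le> E t" unfolding E_def using i finI by (intro member_le_sum sum_nonneg) auto
  finally show ?thesis .
qed

lemma term_le_D: "i \<in> I \<Longrightarrow> j \<in> I \<Longrightarrow> (norm (q i t - q j t))\<^sup>2 \<le> D t"
proof -
  assume i: "i \<in> I" and j: "j \<in> I"
  have "(norm (q i t - q j t))\<^sup>2 \<le> (\<Sum>j\<in>I. (norm (q i t - q j t))\<^sup>2)"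
    using j finI by (intro member_le_sum) auto
  also have "\<dots> \<le> D t" unfolding D_def using i finI by (intro member_le_sum sum_nonneg) auto
  finally show ?thesis .
qed

lemma norm_le_sqrtE: "i \<in> I \<Longrightarrow> j \<in> I \<Longrightarrow> norm (p i t - p j t) \<le> sqrt (E t)"
  using term_le_E real_le_rsqrt by blast

lemma norm_le_sqrtD: "i \<in> I \<Longrightarrow> j \<in> I \<Longrightarrow> norm (q i t - q j t) \<le> sqrt (D t)"
  using term_le_D real_le_rsqrt by blast

lemma oneI: "1 \<in> I" and twoI: "2 \<in> I" using N2 by (auto simp: I_def)

lemma G_facts:
  fixes x y :: 'a
  assumes mM: "0 < mG" "mG \<le> MG" "\<forall>z\<in>{0..PM}. mG \<le> dg z \<and> dg z \<le> MG"
    and x: "norm x \<le> PM" and y: "norm y \<le> PM"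
  shows "mG * (norm (x - y))\<^sup>2 \<le> inner (x - y) (velG g x - velG g y)"
    and "norm (velG g x - velG g y) \<le> MG * norm (x - y)"
proof -
  define al where "al z = (if z = 0 then mG else g (norm z) / norm z)" for z :: 'a
  have rep: "velG g z = al z *\<^sub>R z" for z :: 'a by (simp add: velG_def al_def)
  have mul: "al z * norm z = g (norm z)" for z by (auto simp: al_def g0)
  have bnd: "mG \<le> al z \<and> al z \<le> MG" if "norm z \<le> PM" for z
  proof (cases "z = 0")
    case True then show ?thesis using mM by (simp add: al_def)
  next
    case False
    then have n: "norm z > 0" by simp
    have "mG * (norm z - 0) \<le> g (norm z) - g 0" "g (norm z) - g 0 \<le> MG * (norm z - 0)"
      using g_bounds[OF mM(3), of 0 "norm z"] that by auto
    then show ?thesis using n False by (simp add: al_def g0 field_simps)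
  qed
  have gb: "mG * \<bar>r - s\<bar> \<le> \<bar>g r - g s\<bar> \<and> \<bar>g r - g s\<bar> \<le> MG * \<bar>r - s\<bar> \<and> mG * (r - s)\<^sup>2 \<le> (g r - g s) * (r - s)"
    if "0 \<le> r" "r \<le> PM" "0 \<le> s" "s \<le> PM" for r s
  proof (cases "s \<le> r")
    case True
    have b: "mG * (r - s) \<le> g r - g s" "g r - g s \<le> MG * (r - s)"
      using g_bounds[OF mM(3), of s r] that True by auto
    have c: "mG * (r - s) * (r - s) \<le> (g r - g s) * (r - s)"
      using b True by (intro mult_right_mono) auto
    have "0 \<le> mG * (r - s)" using True mM by simp
    then have "\<bar>g r - g s\<bar> = g r - g s" using b by (intro abs_of_nonneg) linarith
    then show ?thesis using b c True mM by (simp add: power2_eq_square mult.assoc)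
  next
    case False
    have b: "mG * (s - r) \<le> g s - g r" "g s - g r \<le> MG * (s - r)"
      using g_bounds[OF mM(3), of r s] that False by auto
    have c: "mG * (s - r) * (s - r) \<le> (g s - g r) * (s - r)"
      using b False by (intro mult_right_mono) auto
    have "0 \<le> mG * (s - r)" using False mM by simp
    then have e1: "\<bar>g r - g s\<bar> = g s - g r" using b by linarith
    have e2: "\<bar>r - s\<bar> = s - r" using False by linarith
    have e3: "(r - s)\<^sup>2 = (s - r) * (s - r)" "(g r - g s) * (r - s) = (g s - g r) * (s - r)"
      by (simp_all add: power2_eq_square algebra_simps)
    show ?thesis unfolding e1 e2 e3 using b c by (simp add: mult.assoc)
  qed
  show "mG * (norm (x - y))\<^sup>2 \<le> inner (x - y) (velG g x - velG g y)"
    by (rule G_mono[OF rep[of x] rep[of y]]) (use bnd x y mul gb[of "norm x" "norm y"] in auto)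
  show "norm (velG g x - velG g y) \<le> MG * norm (x - y)"
    by (rule G_lip[OF rep[of x] rep[of y]]) (use bnd[OF x] bnd[OF y] mul gb[of "norm x" "norm y"] mM x y in auto)
qed

end

context cs begin

definition "Sd t = (\<Sum>i\<in>I. \<Sum>k\<in>I. w i k t * inner (p k t - p i t) (Gp k t - Gp i t))"
definition "Dd t = (\<Sum>i\<in>I. \<Sum>j\<in>I. 2 * inner (q i t - q j t) (Gp i t - Gp j t))"

lemma E_der': "t > 0 \<Longrightarrow> (E has_real_derivative (-2 * \<kappa> * Sd t)) (at t)"
  unfolding Sd_def by (rule E_der)

lemma D_der': "t > 0 \<Longrightarrow> (D has_real_derivative Dd t) (at t)"
  unfolding Dd_def by (rule D_der)

context
  fixes T \<delta> Mc PM mG MG :: real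
  assumes T0: "T \<ge> 0" and \<delta>0: "\<delta> > 0" and Mc0: "Mc > 0"
    and good: "\<forall>t\<in>{0..T}. (\<forall>i\<in>I. \<forall>j\<in>I. i \<noteq> j \<longrightarrow> \<delta> \<le> norm (q i t - q j t)) \<and> sqrt (D t) \<le> Mc"
    and PMa: "\<forall>i\<in>I. norm (p i 0) \<le> PM" and PM0: "PM \<ge> 0"
    and mM: "0 < mG" "mG \<le> MG" "\<forall>z\<in>{0..PM}. mG \<le> dg z \<and> dg z \<le> MG"
begin

lemma pbound: "t \<in> {0..T} \<Longrightarrow> i \<in> I \<Longrightarrow> norm (p i t) \<le> PM"
proof -
  assume "t \<in> {0..T}" "i \<in> I"
  have "\<forall>t\<in>{0..T}. \<forall>i\<in>I. \<forall>k\<in>I. i \<noteq> k \<longrightarrow> q i t \<noteq> q k t"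
  proof (intro ballI impI)
    fix t i k assume "t \<in> {0..T}" "i \<in> I" "k \<in> I" "i \<noteq> k"
    then have "\<delta> \<le> norm (q i t - q k t)" using good by blast
    then show "q i t \<noteq> q k t" using \<delta>0 by auto
  qed
  then have "\<forall>t\<in>{0..T}. \<forall>i\<in>I. norm (p i t) \<le> PM" by (rule maxp[OF T0 _ PMa PM0])
  then show ?thesis using \<open>t \<in> {0..T}\<close> \<open>i \<in> I\<close> by blast
qed

lemma Gmon: "t \<in> {0..T} \<Longrightarrow> i \<in> I \<Longrightarrow> k \<in> I \<Longrightarrow>
    mG * (norm (p k t - p i t))\<^sup>2 \<le> inner (p k t - p i t) (Gp k t - Gp i t)"
  unfolding Gp_def by (rule G_facts(1)[OF mM]) (auto intro: pbound)

lemma Glip: "t \<in> {0..T} \<Longrightarrow> i \<in> I \<Longrightarrow> k \<in> I \<Longrightarrow>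
    norm (Gp i t - Gp k t) \<le> MG * norm (p i t - p k t)"
  unfolding Gp_def by (rule G_facts(2)[OF mM]) (auto intro: pbound)

lemma y_ge: "t \<in> {0..T} \<Longrightarrow> \<delta> \<le> sqrt (D t)"
proof -
  assume t: "t \<in> {0..T}"
  have "\<delta> \<le> norm (q 1 t - q 2 t)" using good t oneI twoI by auto
  also have "\<dots> \<le> sqrt (D t)" by (rule norm_le_sqrtD[OF oneI twoI])
  finally show ?thesis .
qed

lemma D_pos: "t \<in> {0..T} \<Longrightarrow> D t > 0"
proof -
  assume t: "t \<in> {0..T}"
  have "0 < sqrt (D t)" using y_ge[OF t] \<delta>0 by linarith
  then show ?thesis by simp
qed

lemma w_lower:
  assumes t: "t \<in> {0..T}" and i: "i \<in> I" and k: "k \<in> I" and ik: "i \<noteq> k"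
  shows "\<psi> (sqrt (D t)) \<le> w i k t" "0 < \<psi> (sqrt (D t))" "\<psi> Mc \<le> \<psi> (sqrt (D t))"
proof -
  have d: "\<delta> \<le> norm (q k t - q i t)" using good t i k ik by auto
  have le: "norm (q k t - q i t) \<le> sqrt (D t)" by (rule norm_le_sqrtD[OF k i])
  show "\<psi> (sqrt (D t)) \<le> w i k t" unfolding w_def
    by (rule psi_mono) (use d \<delta>0 le in auto)
  show "0 < \<psi> (sqrt (D t))" by (rule psi_pos) (use D_pos[OF t] in auto)
  show "\<psi> Mc \<le> \<psi> (sqrt (D t))"
    by (rule psi_mono) (use D_pos[OF t] good t in auto)
qed

lemma Sd_ge: "t \<in> {0..T} \<Longrightarrow> \<psi> (sqrt (D t)) * mG * E t \<le> Sd t"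
proof -
  assume t: "t \<in> {0..T}"
  have "\<psi> (sqrt (D t)) * mG * E t = (\<Sum>i\<in>I. \<Sum>k\<in>I. \<psi> (sqrt (D t)) * mG * (norm (p k t - p i t))\<^sup>2)"
    unfolding E_def by (simp add: sum_distrib_left norm_minus_commute)
  also have "\<dots> \<le> Sd t" unfolding Sd_def
  proof (intro sum_mono)
    fix i k assume i: "i \<in> I" and k: "k \<in> I"
    show "\<psi> (sqrt (D t)) * mG * (norm (p k t - p i t))\<^sup>2 \<le> w i k t * inner (p k t - p i t) (Gp k t - Gp i t)"
    proof (cases "i = k")
      case True then show ?thesis by simp
    next
      case False
      have a: "\<psi> (sqrt (D t)) \<le> w i k t" "0 < \<psi> (sqrt (D t))" using w_lower[OF t i k False] by auto
      have b: "mG * (norm (p k t - p i t))\<^sup>2 \<le> inner (p k t - p i t) (Gp k t - Gp i t)"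
        by (rule Gmon[OF t i k])
      have c: "0 \<le> mG * (norm (p k t - p i t))\<^sup>2" using mM by simp
      have "\<psi> (sqrt (D t)) * (mG * (norm (p k t - p i t))\<^sup>2) \<le> w i k t * inner (p k t - p i t) (Gp k t - Gp i t)"
        using a b c by (intro mult_mono) auto
      then show ?thesis by (simp add: mult.assoc)
    qed
  qed
  finally show ?thesis .
qed

lemma Dd_le: "t \<in> {0..T} \<Longrightarrow> Dd t \<le> 2 * MG * sqrt (D t) * sqrt (E t)"
proof -
  assume t: "t \<in> {0..T}"
  have "Dd t \<le> (\<Sum>i\<in>I. \<Sum>j\<in>I. 2 * MG * (norm (q i t - q j t) * norm (p i t - p j t)))"
    unfolding Dd_def
  proof (intro sum_mono)
    fix i j assume i: "i \<in> I" and j: "j \<in> I"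
    have "inner (q i t - q j t) (Gp i t - Gp j t) \<le> norm (q i t - q j t) * norm (Gp i t - Gp j t)"
      by (rule norm_cauchy_schwarz)
    also have "\<dots> \<le> norm (q i t - q j t) * (MG * norm (p i t - p j t))"
      by (intro mult_left_mono Glip[OF t i j]) simp
    finally show "2 * inner (q i t - q j t) (Gp i t - Gp j t) \<le> 2 * MG * (norm (q i t - q j t) * norm (p i t - p j t))"
      by (simp add: algebra_simps)
  qed
  also have "\<dots> = 2 * MG * (\<Sum>i\<in>I. \<Sum>j\<in>I. norm (q i t - q j t) * norm (p i t - p j t))"
    by (simp add: sum_distrib_left)
  also have "\<dots> \<le> 2 * MG * (sqrt (D t) * sqrt (E t))"
    unfolding D_def E_def using mM
    by (intro mult_left_mono cs_double[OF finI]) auto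
  finally show ?thesis by (simp add: mult.assoc)
qed


lemma Psi_der: "x > \<delta>/2 \<Longrightarrow> ((\<lambda>x. integral {\<delta>/2..x} \<psi>) has_real_derivative \<psi> x) (at x)"
proof -
  assume x: "x > \<delta>/2"
  have c: "continuous_on {\<delta>/2..x+1} \<psi>"
    by (rule continuous_on_subset[OF psi_cont]) (use \<delta>0 in auto)
  have "((\<lambda>x. integral {\<delta>/2..x} \<psi>) has_real_derivative \<psi> x) (at x within {\<delta>/2..x+1})"
    by (rule integral_has_real_derivative[OF c]) (use x in auto)
  moreover have "at x within {\<delta>/2..x+1} = at x"
    by (rule at_within_interior) (use x in auto)
  ultimately show ?thesis by simp
qed

lemma Psi_cont: "continuous_on {\<delta>/2<..} (\<lambda>x. integral {\<delta>/2..x} \<psi>)"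
  by (rule continuous_at_imp_continuous_on) (auto intro: DERIV_isCont Psi_der)

lemma Psi_diff: "\<delta>/2 \<le> a \<Longrightarrow> a \<le> b \<Longrightarrow>
   integral {\<delta>/2..b} \<psi> - integral {\<delta>/2..a} \<psi> = integral {a..b} \<psi>"
proof -
  assume a: "\<delta>/2 \<le> a" "a \<le> b"
  have c: "continuous_on {\<delta>/2..b} \<psi>"
    by (rule continuous_on_subset[OF psi_cont]) (use \<delta>0 in auto)
  have "integral {\<delta>/2..a} \<psi> + integral {a..b} \<psi> = integral {\<delta>/2..b} \<psi>"
    by (rule Henstock_Kurzweil_Integration.integral_combine[OF a integrable_continuous_real[OF c]])
  then show ?thesis by simp
qed

lemma sqrt_aux:
  fixes e s :: real
  assumes "0 \<le> e" "0 < s"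
  shows "e - s \<le> e\<^sup>2 / sqrt (e\<^sup>2 + s\<^sup>2)"
proof -
  have zpos: "sqrt (e\<^sup>2 + s\<^sup>2) > 0" using assms by (simp add: add_nonneg_pos)
  have zle: "sqrt (e\<^sup>2 + s\<^sup>2) \<le> e + s"
    by (rule real_le_lsqrt) (use assms in \<open>auto simp: power2_eq_square algebra_simps\<close>)
  have "(e - s) * sqrt (e\<^sup>2 + s\<^sup>2) \<le> e\<^sup>2"
  proof (cases "e \<le> s")
    case True
    then have "(e - s) * sqrt (e\<^sup>2 + s\<^sup>2) \<le> 0" using zpos by (simp add: mult_nonpos_nonneg)
    then show ?thesis by (simp add: order_trans)
  next
    case False
    then have "(e - s) * sqrt (e\<^sup>2 + s\<^sup>2) \<le> (e - s) * (e + s)" using zle by (intro mult_left_mono) auto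
    also have "\<dots> \<le> e\<^sup>2" by (simp add: power2_eq_square algebra_simps)
    finally show ?thesis .
  qed
  then show ?thesis using zpos by (simp add: pos_le_divide_eq)
qed

lemma functional:
  assumes t: "t \<in> {0..T}"
  shows "integral {\<delta>/2..sqrt (D t)} \<psi> - integral {\<delta>/2..sqrt (D 0)} \<psi> \<le> MG * sqrt (E 0) / (\<kappa> * mG)"
proof -
  obtain B where B: "B \<ge> 0" "\<And>r. r > 0 \<Longrightarrow> \<psi> r \<le> B" using psi_bound by blast
  define c where "c = \<kappa> * mG / MG"
  have c0: "c > 0" using kp mM by (simp add: c_def)
  define \<Psi> where "\<Psi> x = integral {\<delta>/2..x} \<psi>" for x
  define y where "y x = sqrt (D x)" for x
  have key: "\<Psi> (y t) - \<Psi> (y 0) \<le> sqrt (E 0) / c + (1 / c + MG * B * t) * s" if s: "s > 0" for s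
  proof -
    define K where "K = MG * B * s"
    define z where "z x = sqrt (E x + s\<^sup>2)" for x
    define F where "F x = \<Psi> (y x) + z x / c - K * x" for x
    have "F t \<le> F 0"
    proof (rule DERIV_nonpos_imp_decreasing_open[of 0 t F])
      show "0 \<le> t" using t by simp
      have cy: "continuous_on {0..t} y" unfolding y_def
        by (intro continuous_intros continuous_on_subset[OF D_cont]) auto
      have "continuous_on {0..t} (\<lambda>x. \<Psi> (y x))"
      proof (rule continuous_on_compose2[OF _ cy])
        show "continuous_on {\<delta>/2<..} \<Psi>" unfolding \<Psi>_def by (rule Psi_cont)
        show "y ` {0..t} \<subseteq> {\<delta>/2<..}"
        proof
          fix u assume "u \<in> y ` {0..t}"
          then obtain x where x: "x \<in> {0..t}" "u = y x" by blast
          then have "\<delta> \<le> y x" unfolding y_def using t by (intro y_ge) auto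
          then show "u \<in> {\<delta>/2<..}" using x \<delta>0 by auto
        qed
      qed
      moreover have "continuous_on {0..t} z" unfolding z_def
        by (intro continuous_intros continuous_on_subset[OF E_cont]) auto
      ultimately show "continuous_on {0..t} F" unfolding F_def
        using c0 by (intro continuous_intros) auto
      fix x assume x: "0 < x" "x < t"
      then have xT: "x \<in> {0..T}" using t by auto
      have Dp: "D x > 0" by (rule D_pos[OF xT])
      have yx: "y x \<ge> \<delta>" unfolding y_def by (rule y_ge[OF xT])
      have ypos: "y x > 0" using yx \<delta>0 by simp
      have zpos: "E x + s\<^sup>2 > 0" using E_nonneg[of x] s by (simp add: add_nonneg_pos)
      have dy: "(y has_real_derivative inverse (sqrt (D x)) / 2 * Dd x) (at x)"
        unfolding y_def by (rule DERIV_chain2[OF DERIV_real_sqrt[OF Dp] D_der'[OF x(1)]])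
      have dPsi: "((\<lambda>x. \<Psi> (y x)) has_real_derivative \<psi> (y x) * (inverse (sqrt (D x)) / 2 * Dd x)) (at x)"
        unfolding \<Psi>_def by (rule DERIV_chain2[OF Psi_der dy]) (use yx \<delta>0 in auto)
      have dE: "((\<lambda>x. E x + s\<^sup>2) has_real_derivative (-2 * \<kappa> * Sd x)) (at x)"
        using E_der'[OF x(1)] by (auto intro!: derivative_eq_intros)
      have dz: "(z has_real_derivative inverse (sqrt (E x + s\<^sup>2)) / 2 * (-2 * \<kappa> * Sd x)) (at x)"
        unfolding z_def by (rule DERIV_chain2[OF DERIV_real_sqrt[OF zpos] dE])
      have dF: "(F has_real_derivative
          (\<psi> (y x) * (inverse (sqrt (D x)) / 2 * Dd x) + (inverse (sqrt (E x + s\<^sup>2)) / 2 * (-2 * \<kappa> * Sd x)) / c - K)) (at x)"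
        unfolding F_def using dPsi dz c0 by (auto intro!: derivative_eq_intros)
      have psip: "\<psi> (y x) > 0" using w_lower(2)[OF xT oneI twoI] by (simp add: y_def)
      have a: "\<psi> (y x) * (inverse (sqrt (D x)) / 2 * Dd x) \<le> \<psi> (y x) * (MG * sqrt (E x))"
      proof -
        have "Dd x \<le> 2 * MG * y x * sqrt (E x)" unfolding y_def by (rule Dd_le[OF xT])
        then have "inverse (y x) / 2 * Dd x \<le> MG * sqrt (E x)"
          using ypos by (simp add: field_simps)
        then show ?thesis using psip unfolding y_def by (intro mult_left_mono) auto
      qed
      have b: "(inverse (sqrt (E x + s\<^sup>2)) / 2 * (-2 * \<kappa> * Sd x)) / c \<le> - (MG * \<psi> (y x) * (sqrt (E x) - s))"
      proof -
        let ?z = "sqrt (E x + s\<^sup>2)"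
        have zz: "?z > 0" using zpos by simp
        have S: "\<psi> (y x) * mG * E x \<le> Sd x" unfolding y_def by (rule Sd_ge[OF xT])
        have "(inverse ?z / 2 * (-2 * \<kappa> * Sd x)) / c = - (MG / mG) * Sd x / ?z"
          using kp mM zz by (simp add: c_def field_simps)
        also have "\<dots> \<le> - (MG / mG) * (\<psi> (y x) * mG * E x) / ?z"
          using S mM zz kp by (simp add: divide_right_mono field_simps)
        also have "\<dots> = - (MG * \<psi> (y x)) * (E x / ?z)"
          using mM by (simp add: field_simps)
        also have "\<dots> \<le> - (MG * \<psi> (y x)) * (sqrt (E x) - s)"
        proof -
          have "sqrt (E x) - s \<le> (sqrt (E x))\<^sup>2 / sqrt ((sqrt (E x))\<^sup>2 + s\<^sup>2)"
            by (rule sqrt_aux) (use s E_nonneg[of x] in auto)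
          then have "sqrt (E x) - s \<le> E x / ?z" using E_nonneg[of x] by simp
          moreover have "0 \<le> MG * \<psi> (y x)" using psip mM by simp
          ultimately have "MG * \<psi> (y x) * (sqrt (E x) - s) \<le> MG * \<psi> (y x) * (E x / ?z)"
            by (rule mult_left_mono)
          then show ?thesis by simp
        qed
        finally show ?thesis by simp
      qed
      have cc: "MG * \<psi> (y x) * s \<le> K"
        unfolding K_def using B(2)[OF ypos] mM s by (intro mult_right_mono mult_left_mono) auto
      have "\<psi> (y x) * (inverse (sqrt (D x)) / 2 * Dd x) + (inverse (sqrt (E x + s\<^sup>2)) / 2 * (-2 * \<kappa> * Sd x)) / c - K \<le> 0"
      proof -
        have "- (MG * \<psi> (y x) * (sqrt (E x) - s)) = - (\<psi> (y x) * (MG * sqrt (E x))) + MG * \<psi> (y x) * s"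
          by (simp add: algebra_simps)
        then show ?thesis using a b cc by linarith
      qed
      then show "\<exists>d. (F has_real_derivative d) (at x) \<and> d \<le> 0" using dF by blast
    qed
    then have "\<Psi> (y t) + z t / c - K * t \<le> \<Psi> (y 0) + z 0 / c" by (simp add: F_def)
    moreover have "z t / c \<ge> 0" using c0 E_nonneg[of t] unfolding z_def by (intro divide_nonneg_pos) auto
    moreover have "z 0 \<le> sqrt (E 0) + s"
      unfolding z_def by (rule real_le_lsqrt) (use s E_nonneg[of 0] in \<open>auto simp: power2_eq_square algebra_simps\<close>)
    ultimately have "\<Psi> (y t) - \<Psi> (y 0) \<le> (sqrt (E 0) + s) / c + K * t"
      using c0 by (smt (verit) divide_right_mono)
    moreover have "(sqrt (E 0) + s) / c = sqrt (E 0) / c + s / c" by (simp add: add_divide_distrib)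
    moreover have "(1 / c + MG * B * t) * s = s / c + K * t" by (simp add: K_def algebra_simps)
    ultimately show ?thesis by linarith
  qed
  have "\<Psi> (y t) - \<Psi> (y 0) \<le> sqrt (E 0) / c"
    by (rule eps_le[OF _ key]) (use c0 B mM t in auto)
  then show ?thesis using kp mM by (simp add: \<Psi>_def y_def c_def mult.commute[of "sqrt (E 0)" MG])
qed


lemma E_decay:
  assumes t: "t \<in> {0..T}"
  shows "sqrt (E t) \<le> sqrt (E 0) * exp (- (\<kappa> * mG * \<psi> Mc) * t)"
proof -
  define lam where "lam = \<kappa> * mG * \<psi> Mc"
  define H where "H x = E x * exp (2 * lam * x)" for x
  have "H t \<le> H 0"
  proof (rule DERIV_nonpos_imp_decreasing_open[of 0 t H])
    show "0 \<le> t" using t by simp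
    show "continuous_on {0..t} H" unfolding H_def
      by (intro continuous_intros continuous_on_subset[OF E_cont]) auto
    fix x assume x: "0 < x" "x < t"
    then have xT: "x \<in> {0..T}" using t by auto
    have dH: "(H has_real_derivative (-2 * \<kappa> * Sd x) * exp (2 * lam * x) + E x * (exp (2 * lam * x) * (2 * lam))) (at x)"
      unfolding H_def using E_der'[OF x(1)] by (auto intro!: derivative_eq_intros)
    have "\<psi> Mc * mG * E x \<le> \<psi> (sqrt (D x)) * mG * E x"
      using w_lower(3)[OF xT oneI twoI] mM E_nonneg[of x] by (intro mult_right_mono) auto
    also have "\<dots> \<le> Sd x" by (rule Sd_ge[OF xT])
    finally have "lam * E x \<le> \<kappa> * Sd x" using kp unfolding lam_def
      by (smt (verit, best) mult.assoc mult.commute mult_left_mono)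
    then have "(-2 * \<kappa> * Sd x) + E x * (2 * lam) \<le> 0" by (simp add: algebra_simps)
    then have "((-2 * \<kappa> * Sd x) + E x * (2 * lam)) * exp (2 * lam * x) \<le> 0"
      by (simp add: mult_nonpos_nonneg)
    then show "\<exists>d. (H has_real_derivative d) (at x) \<and> d \<le> 0"
      using dH by (intro exI[of _ "(-2 * \<kappa> * Sd x) * exp (2 * lam * x) + E x * (exp (2 * lam * x) * (2 * lam))"])
        (simp add: algebra_simps)
  qed
  then have "E t * exp (2 * lam * t) \<le> E 0" by (simp add: H_def)
  then have "E t \<le> E 0 * exp (- (2 * lam * t))"
    by (simp add: exp_minus field_simps)
  also have "exp (- (2 * lam * t)) = (exp (- lam * t))\<^sup>2"
    by (simp add: power2_eq_square exp_add[symmetric])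
  finally have "sqrt (E t) \<le> sqrt (E 0 * (exp (- lam * t))\<^sup>2)" by (rule real_sqrt_le_mono)
  also have "\<dots> = sqrt (E 0) * exp (- lam * t)" by (simp add: real_sqrt_mult)
  finally show ?thesis by (simp add: lam_def)
qed

lemma dist_bound:
  assumes t: "t \<in> {0..T}" and i: "i \<in> I" and j: "j \<in> I"
  shows "norm ((q i t - q j t) - (q i 0 - q j 0)) \<le> MG * sqrt (E 0) / (\<kappa> * mG * \<psi> Mc)"
proof -
  define lam where "lam = \<kappa> * mG * \<psi> Mc"
  have lp: "lam > 0" using kp mM psi_pos[OF Mc0] by (simp add: lam_def)
  define A where "A = MG * sqrt (E 0) / lam"
  have A0: "A \<ge> 0" using lp mM E_nonneg[of 0] unfolding A_def by (intro divide_nonneg_pos mult_nonneg_nonneg) auto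
  show ?thesis
  proof (cases "t = 0")
    case True then show ?thesis using A0 by (simp add: A_def lam_def)
  next
    case False
    then have tp: "0 < t" using t by simp
    define \<phi> where "\<phi> x = - A * exp (- lam * x)" for x
    have "norm ((q i t - q j t) - (q i 0 - q j 0)) \<le> \<phi> t - \<phi> 0"
    proof (rule differentiable_bound_general[OF tp, of "\<lambda>s. q i s - q j s" \<phi> "\<lambda>s. Gp i s - Gp j s" "\<lambda>x. A * lam * exp (- lam * x)"])
      show "continuous_on {0..t} (\<lambda>s. q i s - q j s)"
        using i j by (intro continuous_intros continuous_on_subset[OF q_cont]) (auto simp: I_def)
      show "continuous_on {0..t} \<phi>" unfolding \<phi>_def by (intro continuous_intros)
      fix x assume x: "0 < x" "x < t"
      then have xT: "x \<in> {0..T}" using t by auto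
      show "((\<lambda>s. q i s - q j s) has_vector_derivative Gp i x - Gp j x) (at x)"
        using q_der[OF i x(1)] q_der[OF j x(1)] by (rule has_vector_derivative_diff)
      have "(\<phi> has_real_derivative A * lam * exp (- lam * x)) (at x)"
        unfolding \<phi>_def by (auto intro!: derivative_eq_intros)
      then show "(\<phi> has_vector_derivative A * lam * exp (- lam * x)) (at x)"
        by (simp add: has_real_derivative_iff_has_vector_derivative)
      have "norm (Gp i x - Gp j x) \<le> MG * norm (p i x - p j x)" by (rule Glip[OF xT i j])
      also have "\<dots> \<le> MG * sqrt (E x)" using mM by (intro mult_left_mono norm_le_sqrtE[OF i j]) auto
      also have "\<dots> \<le> MG * (sqrt (E 0) * exp (- lam * x))"
        using mM E_decay[OF xT] by (intro mult_left_mono) (auto simp: lam_def)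
      also have "\<dots> = A * lam * exp (- lam * x)" using lp by (simp add: A_def)
      finally show "norm (Gp i x - Gp j x) \<le> A * lam * exp (- lam * x)" .
    qed
    also have "\<phi> t - \<phi> 0 = A * (1 - exp (- lam * t))" by (simp add: \<phi>_def algebra_simps)
    also have "\<dots> \<le> A" using A0 by (simp add: mult_left_le)
    finally show ?thesis by (simp add: A_def lam_def)
  qed
qed

lemma improve:
  assumes hint: "MG * sqrt (E 0) / (\<kappa> * mG) < integral {sqrt (D 0)..Mc} \<psi>"
    and hdist: "\<forall>i\<in>I. \<forall>j\<in>I. i \<noteq> j \<longrightarrow> MG * sqrt (E 0) / (\<kappa> * mG * \<psi> Mc) + \<delta> < norm (q i 0 - q j 0)"
    and t: "t \<in> {0..T}"
  shows "(\<forall>i\<in>I. \<forall>j\<in>I. i \<noteq> j \<longrightarrow> \<delta> < norm (q i t - q j t)) \<and> sqrt (D t) < Mc"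
proof
  show "\<forall>i\<in>I. \<forall>j\<in>I. i \<noteq> j \<longrightarrow> \<delta> < norm (q i t - q j t)"
  proof (intro ballI impI)
    fix i j assume i: "i \<in> I" and j: "j \<in> I" and ij: "i \<noteq> j"
    have "norm (q i 0 - q j 0) - norm (q i t - q j t) \<le> norm ((q i t - q j t) - (q i 0 - q j 0))"
      by (metis norm_minus_commute norm_triangle_ineq2)
    then show "\<delta> < norm (q i t - q j t)" using dist_bound[OF t i j] hdist i j ij by fastforce
  qed
  have t0: "0 \<in> {0..T}" using T0 by simp
  have y0: "\<delta>/2 \<le> sqrt (D 0)" "sqrt (D 0) \<le> Mc" using y_ge[OF t0] \<delta>0 good t0 by auto
  have yt: "\<delta>/2 \<le> sqrt (D t)" using y_ge[OF t] \<delta>0 by auto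
  have f: "integral {\<delta>/2..sqrt (D t)} \<psi> - integral {\<delta>/2..sqrt (D 0)} \<psi> \<le> MG * sqrt (E 0) / (\<kappa> * mG)"
    by (rule functional[OF t])
  have m: "integral {\<delta>/2..Mc} \<psi> - integral {\<delta>/2..sqrt (D 0)} \<psi> = integral {sqrt (D 0)..Mc} \<psi>"
    by (rule Psi_diff[OF y0])
  show "sqrt (D t) < Mc"
  proof (rule ccontr)
    assume "\<not> sqrt (D t) < Mc"
    then have ge: "Mc \<le> sqrt (D t)" by simp
    have "integral {\<delta>/2..sqrt (D t)} \<psi> - integral {\<delta>/2..Mc} \<psi> = integral {Mc..sqrt (D t)} \<psi>"
      by (rule Psi_diff) (use y0 ge in auto)
    moreover have "integral {Mc..sqrt (D t)} \<psi> \<ge> 0"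
    proof (rule integral_nonneg)
      have "continuous_on {Mc..sqrt (D t)} \<psi>"
        by (rule continuous_on_subset[OF psi_cont]) (use Mc0 in auto)
      then show "\<psi> integrable_on {Mc..sqrt (D t)}" by (rule integrable_continuous_real)
      fix x assume "x \<in> {Mc..sqrt (D t)}"
      then show "0 \<le> \<psi> x" using Mc0 psi_pos[of x] by auto
    qed
    ultimately show False using f m hint by linarith
  qed
qed

end
end

theorem corollary2p1:
  fixes N :: nat and \<kappa> :: real
    and g dg \<psi> :: "real \<Rightarrow> real"
    and q p :: "nat \<Rightarrow> real \<Rightarrow> 'a::euclidean_space"
    and Mc :: real
  assumes N_pos: "N \<ge> 1"
    and kappa_pos: "\<kappa> > 0"
    and g_deriv: "\<And>r. r \<ge> 0 \<Longrightarrow> (g has_real_derivative dg r) (at r within {0..})"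
    and dg_cont: "continuous_on {0..} dg"
    and g0: "g 0 = 0"
    and dg_bounds: "\<And>b. \<exists>m M'. 0 < m \<and> (\<forall>r\<in>{0..b}. m \<le> dg r \<and> dg r \<le> M')"
    and g_cvx: "convex_on {0<..} g \<or> concave_on {0<..} g"
    and psi_pos: "\<And>r. r > 0 \<Longrightarrow> \<psi> r > 0"
    and psi_bdd: "bounded (\<psi> ` {0<..})"
    and psi_lip: "\<exists>L. \<forall>r>0. \<forall>s>0. \<bar>\<psi> r - \<psi> s\<bar> \<le> L * \<bar>r - s\<bar>"
    and psi_mono: "\<And>r s. 0 < r \<Longrightarrow> r \<le> s \<Longrightarrow> \<psi> s \<le> \<psi> r"
    and q_cont: "\<And>i. i \<in> {1..N} \<Longrightarrow> continuous_on {0..} (q i)"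
    and p_cont: "\<And>i. i \<in> {1..N} \<Longrightarrow> continuous_on {0..} (p i)"
    and q_ode: "\<And>i t. i \<in> {1..N} \<Longrightarrow> t > 0 \<Longrightarrow>
                  (q i has_vector_derivative velG g (p i t)) (at t)"
    and p_ode: "\<And>i t. i \<in> {1..N} \<Longrightarrow> t > 0 \<Longrightarrow>
                  (p i has_vector_derivative
                     (\<kappa> / real N) *\<^sub>R (\<Sum>k\<in>{1..N}. \<psi> (norm (q k t - q i t)) *\<^sub>R
                         (velG g (p k t) - velG g (p i t)))) (at t)"
    and M_pos: "0 < Mc"
    and hyp: "let PM = Max ((\<lambda>i. norm (p i 0)) ` {1..N});
                  MG = (SUP r\<in>{0..PM}. dg r);
                  mG = (INF r\<in>{0..PM}. dg r);
                  \<M> = min mG (mG\<^sup>2 / MG);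
                  lhs = MG * cfg_norm N (\<lambda>i. p i 0) / (\<kappa> * \<M>)
              in lhs < oint \<psi> (cfg_norm N (\<lambda>i. q i 0)) Mc \<and>
                 (\<forall>i\<in>{1..N}. \<forall>j\<in>{1..N}. i \<noteq> j \<longrightarrow>
                     lhs < \<psi> Mc * norm (q i 0 - q j 0))"
  shows "\<exists>\<delta>>0. \<forall>t\<ge>0. \<forall>i\<in>{1..N}. \<forall>j\<in>{1..N}. i \<noteq> j \<longrightarrow> \<delta> \<le> norm (q i t - q j t)"
proof -
  show ?thesis
  proof (cases "N = 1")
    case True
    then show ?thesis by (intro exI[of _ 1]) auto
  next
    case False
    then have N2: "N \<ge> 2" using N_pos by simp
    interpret cs N \<kappa> g dg \<psi> q p
      by unfold_locales (use N2 kappa_pos g_deriv g0 dg_bounds psi_pos psi_bdd psi_lip psi_mono q_cont p_cont q_ode p_ode in auto)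
    define PM where "PM = Max ((\<lambda>i. norm (p i 0)) ` {1..N})"
    define MG where "MG = (SUP r\<in>{0..PM}. dg r)"
    define mG where "mG = (INF r\<in>{0..PM}. dg r)"
    define MM where "MM = min mG (mG\<^sup>2 / MG)"
    define lhs where "lhs = MG * cfg_norm N (\<lambda>i. p i 0) / (\<kappa> * MM)"
    have hyp': "lhs < oint \<psi> (cfg_norm N (\<lambda>i. q i 0)) Mc \<and>
                 (\<forall>i\<in>{1..N}. \<forall>j\<in>{1..N}. i \<noteq> j \<longrightarrow> lhs < \<psi> Mc * norm (q i 0 - q j 0))"
      using hyp unfolding Let_def lhs_def MM_def mG_def MG_def PM_def by simp
    have PMa: "\<forall>i\<in>I. norm (p i 0) \<le> PM" unfolding PM_def I_def by (auto intro: Max_ge)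
    have PM0: "PM \<ge> 0"
    proof -
      have "norm (p 1 0) \<le> PM" using PMa oneI by blast
      then show ?thesis by (meson norm_ge_zero order_trans)
    qed
    obtain m M' where mM': "0 < m" "\<forall>r\<in>{0..PM}. m \<le> dg r \<and> dg r \<le> M'" using dg_bounds[of PM] by blast
    have bb1: "bdd_below (dg ` {0..PM})"
      by (rule bdd_belowI2[where m=m]) (use mM' in auto)
    have bb2: "bdd_above (dg ` {0..PM})"
      by (rule bdd_aboveI2[where M=M']) (use mM' in auto)
    note bb = bb1 bb2
    have ne: "{0..PM} \<noteq> {}" using PM0 by simp
    have mGl: "mG \<le> dg z" "dg z \<le> MG" if "z \<in> {0..PM}" for z
      unfolding mG_def MG_def using that bb by (auto intro: cINF_lower cSUP_upper)
    have mG0: "m \<le> mG" unfolding mG_def using ne mM' by (intro cINF_greatest) auto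
    have z0: "(0::real) \<in> {0..PM}" using PM0 by simp
    have mM: "0 < mG" "mG \<le> MG" "\<forall>z\<in>{0..PM}. mG \<le> dg z \<and> dg z \<le> MG"
      using mG0 mM'(1) mGl(1)[OF z0] mGl(2)[OF z0] mGl by auto
    have cfgP: "cfg_norm N (\<lambda>i. p i 0) = sqrt (E 0)" by (simp add: cfg_norm_def E_def I_def)
    have cfgQ: "cfg_norm N (\<lambda>i. q i 0) = sqrt (D 0)" by (simp add: cfg_norm_def D_def I_def)
    define L0 where "L0 = MG * sqrt (E 0) / (\<kappa> * mG)"
    have MM0: "0 < MM" "MM \<le> mG" using mM by (auto simp: MM_def)
    have L00: "0 \<le> L0" using mM kp E_nonneg[of 0] unfolding L0_def by (intro divide_nonneg_pos mult_nonneg_nonneg) auto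
    have L0le: "L0 \<le> lhs"
    proof -
      have "MG * sqrt (E 0) / (\<kappa> * mG) \<le> MG * sqrt (E 0) / (\<kappa> * MM)"
        using mM MM0 kp E_nonneg[of 0] by (intro divide_left_mono mult_left_mono mult_pos_pos mult_nonneg_nonneg) auto
      then show ?thesis by (simp add: L0_def lhs_def cfgP)
    qed
    have h1: "L0 < oint \<psi> (sqrt (D 0)) Mc" using hyp' L0le cfgQ by simp
    have h2: "\<forall>i\<in>I. \<forall>j\<in>I. i \<noteq> j \<longrightarrow> L0 < \<psi> Mc * norm (q i 0 - q j 0)"
      using hyp' L0le unfolding I_def by force
    have y0: "sqrt (D 0) < Mc"
    proof (rule ccontr)
      assume "\<not> sqrt (D 0) < Mc"
      then have ge: "Mc \<le> sqrt (D 0)" by simp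
      have "integral {Mc..sqrt (D 0)} \<psi> \<ge> 0"
      proof (rule integral_nonneg)
        have "continuous_on {Mc..sqrt (D 0)} \<psi>"
          by (rule continuous_on_subset[OF psi_cont]) (use M_pos in auto)
        then show "\<psi> integrable_on {Mc..sqrt (D 0)}" by (rule integrable_continuous_real)
        fix x assume "x \<in> {Mc..sqrt (D 0)}"
        then show "0 \<le> \<psi> x" using M_pos psi_pos[of x] by auto
      qed
      then have "oint \<psi> (sqrt (D 0)) Mc \<le> 0" using ge by (auto simp: oint_def)
      then show False using h1 L00 by linarith
    qed
    have hint: "MG * sqrt (E 0) / (\<kappa> * mG) < integral {sqrt (D 0)..Mc} \<psi>"
      using h1 y0 by (simp add: oint_def L0_def)
    have psiM: "\<psi> Mc > 0" by (rule psi_pos[OF M_pos])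
    define P where "P = {(i, j). i \<in> I \<and> j \<in> I \<and> i \<noteq> j}"
    have "P \<subseteq> I \<times> I" unfolding P_def by auto
    then have finP: "finite P" using finI by (simp add: finite_subset)
    have "(1, 2) \<in> P" unfolding P_def using oneI twoI by simp
    then have neP: "P \<noteq> {}" by blast
    define dd where "dd x = norm (q (fst x) 0 - q (snd x) 0) - L0 / \<psi> Mc" for x
    define \<delta> where "\<delta> = Min (dd ` P) / 2"
    have ddpos: "dd x > 0" if xP: "x \<in> P" for x
    proof -
      obtain i j where x: "x = (i, j)" "i \<in> I" "j \<in> I" "i \<noteq> j" using xP unfolding P_def by blast
      have "L0 < \<psi> Mc * norm (q i 0 - q j 0)" using h2 x by blast
      then have "L0 / \<psi> Mc < norm (q i 0 - q j 0)" using psiM by (simp add: divide_less_eq mult.commute)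
      then show ?thesis by (simp add: dd_def x)
    qed
    have "0 < Min (dd ` P)" using finP neP ddpos by (subst Min_gr_iff) auto
    then have \<delta>0: "\<delta> > 0" unfolding \<delta>_def by simp
    have hdist: "\<forall>i\<in>I. \<forall>j\<in>I. i \<noteq> j \<longrightarrow> MG * sqrt (E 0) / (\<kappa> * mG * \<psi> Mc) + \<delta> < norm (q i 0 - q j 0)"
    proof (intro ballI impI)
      fix i j assume ij: "i \<in> I" "j \<in> I" "i \<noteq> j"
      then have x: "(i, j) \<in> P" unfolding P_def by simp
      have "Min (dd ` P) \<le> dd (i, j)" using finP x by (intro Min_le) auto
      then have "\<delta> < dd (i, j)" using ddpos[OF x] unfolding \<delta>_def by linarith
      moreover have "MG * sqrt (E 0) / (\<kappa> * mG * \<psi> Mc) = L0 / \<psi> Mc" by (simp add: L0_def)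
      ultimately show "MG * sqrt (E 0) / (\<kappa> * mG * \<psi> Mc) + \<delta> < norm (q i 0 - q j 0)"
        by (simp add: dd_def)
    qed
    define K where "K = insert None (Some ` P)"
    define h where "h k t = (case k of None \<Rightarrow> Mc - sqrt (D t)
        | Some x \<Rightarrow> norm (q (fst x) t - q (snd x) t) - \<delta>)" for k t
    have boot: "\<forall>t\<ge>0. \<forall>k\<in>K. h k t > 0"
    proof (rule bootstrap)
      show "finite K" using finP by (simp add: K_def)
      show "continuous_on {0..} (h k)" if "k \<in> K" for k
      proof (cases k)
        case None then show ?thesis unfolding h_def by (simp, intro continuous_intros D_cont)
      next
        case (Some x)
        then have "fst x \<in> {1..N}" "snd x \<in> {1..N}" using that by (auto simp: K_def P_def I_def)
        then show ?thesis unfolding h_def using Some by (simp, intro continuous_intros q_cont)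
      qed
      show "h k 0 > 0" if "k \<in> K" for k
      proof (cases k)
        case None then show ?thesis using y0 by (simp add: h_def)
      next
        case (Some x)
        then have x: "x \<in> P" using that by (auto simp: K_def)
        then obtain i j where ij: "x = (i, j)" "i \<in> I" "j \<in> I" "i \<noteq> j" unfolding P_def by blast
        have "MG * sqrt (E 0) / (\<kappa> * mG * \<psi> Mc) \<ge> 0"
          using mM kp psiM E_nonneg[of 0] by (intro divide_nonneg_pos mult_nonneg_nonneg mult_pos_pos) auto
        then show ?thesis using hdist ij Some by (force simp: h_def)
      qed
      fix T :: real assume T0: "T \<ge> 0" and hT: "\<forall>t\<in>{0..T}. \<forall>k\<in>K. 0 \<le> h k t"
      have good: "\<forall>t\<in>{0..T}. (\<forall>i\<in>I. \<forall>j\<in>I. i \<noteq> j \<longrightarrow> \<delta> \<le> norm (q i t - q j t)) \<and> sqrt (D t) \<le> Mc"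
      proof (intro ballI conjI impI)
        fix t assume t: "t \<in> {0..T}"
        have "0 \<le> h None t" using hT t by (auto simp: K_def)
        then show "sqrt (D t) \<le> Mc" by (simp add: h_def)
        fix i j assume "i \<in> I" "j \<in> I" "i \<noteq> j"
        then have "Some (i, j) \<in> K" by (simp add: K_def P_def)
        then have "0 \<le> h (Some (i, j)) t" using hT t by blast
        then show "\<delta> \<le> norm (q i t - q j t)" by (simp add: h_def)
      qed
      show "\<forall>t\<in>{0..T}. \<forall>k\<in>K. 0 < h k t"
      proof (intro ballI)
        fix t k assume t: "t \<in> {0..T}" and k: "k \<in> K"
        have imp: "(\<forall>i\<in>I. \<forall>j\<in>I. i \<noteq> j \<longrightarrow> \<delta> < norm (q i t - q j t)) \<and> sqrt (D t) < Mc"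
          by (rule improve[OF T0 \<delta>0 M_pos good PMa PM0 mM hint hdist t])
        show "0 < h k t"
        proof (cases k)
          case None then show ?thesis using imp by (simp add: h_def)
        next
          case (Some x)
          then obtain i j where "x = (i, j)" "i \<in> I" "j \<in> I" "i \<noteq> j" using k by (auto simp: K_def P_def)
          then show ?thesis using imp Some by (simp add: h_def)
        qed
      qed
    qed
    show ?thesis
    proof (intro exI[of _ \<delta>] conjI allI impI ballI)
      show "\<delta> > 0" by (rule \<delta>0)
      fix t :: real and i j assume t: "t \<ge> 0" and i: "i \<in> {1..N}" and j: "j \<in> {1..N}" and ij: "i \<noteq> j"
      then have "Some (i, j) \<in> K" by (simp add: K_def P_def I_def)
      then have "h (Some (i, j)) t > 0" using boot t by blast
      then show "\<delta> \<le> norm (q i t - q j t)" by (simp add: h_def)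
    qed
  qed
qed


end
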